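(* Let $1\le p<\infty$, let $f$ be a function on $[0,1]$, let $0=x_0<x_1<\dots<x_M=1$, and let $g_M$ be the piecewise linear function interpolating $f$ at the points $(x_i,f(x_i))$, $0\le i\le M$. Then $\mathrm{Var}_p(g_M)\le\upsilon_p(M,f)$.
   Context: For $h$ on $[0,1]$ and $I$ an interval, $h(I)=h(\sup I)-h(\inf I)$. $\upsilon_p(n,f)=\sup(\sum_{j=1}^n|f(I_j)|^p)^{1/p}$ over collections of $n$ nonoverlapping subintervals of $[0,1]$. $\mathrm{Var}_p(g)=\sup(\sum_j|g(I_j)|^p)^{1/p}$ over all finite collections of nonoverlapping subintervals of $[0,1]$. *)

theory Defs
  imports Complex_Main "HOL-Library.Extended_Real"
begin

definition nonoverlapping :: "nat \<Rightarrow> (nat \<Rightarrow> real) \<Rightarrow> (nat \<Rightarrow> real) \<Rightarrow> bool" where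
  "nonoverlapping n a b \<longleftrightarrow>
     (\<forall>j<n. 0 \<le> a j \<and> a j \<le> b j \<and> b j \<le> 1) \<and>
     (\<forall>i<n. \<forall>j<n. i \<noteq> j \<longrightarrow> {a i<..<b i} \<inter> {a j<..<b j} = {})"

definition pvar_sum :: "real \<Rightarrow> (real \<Rightarrow> real) \<Rightarrow> nat \<Rightarrow> (nat \<Rightarrow> real) \<Rightarrow> (nat \<Rightarrow> real) \<Rightarrow> real" where
  "pvar_sum p h n a b = (\<Sum>j<n. \<bar>h (b j) - h (a j)\<bar> powr p) powr (1 / p)"

definition upsilon :: "real \<Rightarrow> nat \<Rightarrow> (real \<Rightarrow> real) \<Rightarrow> ereal" where
  "upsilon p n f = (SUP ab \<in> {(a, b). nonoverlapping n a b}. ereal (pvar_sum p f n (fst ab) (snd ab)))"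

definition Var_p :: "real \<Rightarrow> (real \<Rightarrow> real) \<Rightarrow> ereal" where
  "Var_p p g = (SUP nab \<in> {(n, a, b). nonoverlapping n a b}.
       ereal (case nab of (n, a, b) \<Rightarrow> pvar_sum p g n a b))"

end

theory Submission
  imports Defs "HOL-Probability.Probability"
begin


lemma abs_powr_convex:
  fixes p :: real assumes p: "1 \<le> p"
  shows "convex_on UNIV (\<lambda>y::real. \<bar>y\<bar> powr p)"
proof (rule convex_onI)
  fix t y z :: real assume t: "0 < t" "t < 1"
  have h1: "\<bar>(1 - t) * y + t * z\<bar> powr p \<le> ((1 - t) * \<bar>y\<bar> + t * \<bar>z\<bar>) powr p"
    apply (rule powr_mono2) using p t by (auto intro: order.trans[OF abs_triangle_ineq] simp: abs_mult)
  have h2: "((1 - t) * \<bar>y\<bar> + t * \<bar>z\<bar>) powr p \<le> (1 - t) * \<bar>y\<bar> powr p + t * \<bar>z\<bar> powr p"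
  proof (cases "y = 0 \<or> z = 0")
    case True
    have w: "w powr p \<le> w" if "0 \<le> w" "w \<le> 1" for w :: real
    proof (cases "w = 0")
      case False
      then have "w powr p \<le> w powr 1" using that p by (intro powr_mono') auto
      then show ?thesis using False that by simp
    qed simp
    show ?thesis
    proof (cases "y = 0")
      case True
      have "(t * \<bar>z\<bar>) powr p = t powr p * \<bar>z\<bar> powr p" using t by (simp add: powr_mult)
      also have "\<dots> \<le> t * \<bar>z\<bar> powr p" using w[of t] t by (intro mult_right_mono) auto
      finally show ?thesis using True p by simp
    next
      case False
      with True have "z = 0" by auto
      have "((1-t) * \<bar>y\<bar>) powr p = (1-t) powr p * \<bar>y\<bar> powr p" using t by (simp add: powr_mult)
      also have "\<dots> \<le> (1-t) * \<bar>y\<bar> powr p" using w[of "1-t"] t by (intro mult_right_mono) auto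
      finally show ?thesis using \<open>z = 0\<close> p by simp
    qed
  next
    case False
    then have "\<bar>y\<bar> \<in> {0<..}" "\<bar>z\<bar> \<in> {0<..}" by auto
    have "((1 - t) * \<bar>y\<bar> + t * \<bar>z\<bar>) powr p \<le> (1 - t) * \<bar>y\<bar> powr p + t * \<bar>z\<bar> powr p"
      using convex_onD[OF powr_convex[OF p], of t "\<bar>y\<bar>" "\<bar>z\<bar>"] t False by auto
    then show ?thesis .
  qed
  show "\<bar>(1 - t) *\<^sub>R y + t *\<^sub>R z\<bar> powr p \<le> (1 - t) * \<bar>y\<bar> powr p + t * \<bar>z\<bar> powr p"
    using h1 h2 by simp
qed simp

abbreviation "M0 \<equiv> uniform_measure lborel {0..1::real}"

lemma M0_prob: "prob_space M0"
  by (rule prob_space_uniform_measure) auto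

lemma step_meas: "(\<lambda>u::real. if u < l then (A::real) else B) \<in> borel_measurable M0"
  by measurable

lemma step_integral:
  assumes "0 \<le> l" "l \<le> 1"
  shows "integral\<^sup>L M0 (\<lambda>u::real. if u < l then A else B) = B + (A - B) * l"
proof -
  interpret prob_space M0 by (rule M0_prob)
  have e: "(\<lambda>u::real. if u < l then A else B) = (\<lambda>u. B + (A - B) * indicator {..<l} u)"
    by (auto simp: indicator_def)
  have m: "measure M0 {..<l} = l"
  proof -
    have "measure M0 {..<l} = measure lborel ({0..1} \<inter> {..<l}) / measure lborel {0..1::real}"
      by (subst measure_uniform_measure) auto
    also have "{0..1} \<inter> {..<l} = {0..<l}" using assms by auto
    finally show ?thesis using assms by simp
  qed
  have "integral\<^sup>L M0 (\<lambda>u. B + (A - B) * indicator {..<l} u) = integral\<^sup>L M0 (\<lambda>u. B) + integral\<^sup>L M0 (\<lambda>u. (A - B) * indicator {..<l} u)"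
  proof (rule Bochner_Integration.integral_add)
    have "integrable M0 (indicator {..<l} :: real \<Rightarrow> real)"
      by (rule integrable_real_indicator) (auto simp: less_top[symmetric] simp del: emeasure_uniform_measure)
    then show "integrable M0 (\<lambda>u. (A - B) * indicator {..<l} u)" by simp
  qed simp
  also have "\<dots> = B + (A - B) * l" using m by simp
  finally show ?thesis unfolding e .
qed


lemma ioo_disj:
  fixes a b c d :: real
  assumes "a < b" "c < d" "{a<..<b} \<inter> {c<..<d} = {}"
  shows "b \<le> c \<or> d \<le> a"
proof (rule ccontr)
  assume "\<not> ?thesis"
  then have "(max a c + min b d)/2 \<in> {a<..<b} \<inter> {c<..<d}" using assms by auto
  then show False using assms by auto
qed

lemma comb:
  fixes K :: "real \<Rightarrow> nat" and x :: "nat \<Rightarrow> real"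
  assumes p: "1 \<le> p" and nov: "nonoverlapping n a b"
  and Kmono: "\<And>s t. 0 \<le> s \<Longrightarrow> s \<le> t \<Longrightarrow> t \<le> 1 \<Longrightarrow> K s \<le> K t"
  and KM: "\<And>t. 0 \<le> t \<Longrightarrow> t \<le> 1 \<Longrightarrow> K t \<le> M"
  and xmono: "\<And>i j. i \<le> j \<Longrightarrow> j \<le> M \<Longrightarrow> x i \<le> x j"
  and xb: "\<And>i. i \<le> M \<Longrightarrow> 0 \<le> x i \<and> x i \<le> 1"
  shows "ereal (pvar_sum p f n (\<lambda>j. x (K (a j))) (\<lambda>j. x (K (b j)))) \<le> upsilon p M f"
proof -
  have ab: "\<And>j. j < n \<Longrightarrow> 0 \<le> a j \<and> a j \<le> b j \<and> b j \<le> 1"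
    and dis: "\<And>i j. i < n \<Longrightarrow> j < n \<Longrightarrow> i \<noteq> j \<Longrightarrow> {a i<..<b i} \<inter> {a j<..<b j} = {}"
    using nov unfolding nonoverlapping_def by auto
  define J where "J = {j. j < n \<and> K (a j) < K (b j)}"
  define \<phi> where "\<phi> = (\<lambda>j. K (a j))"
  define h where "h = (\<lambda>j. \<bar>f (x (K (b j))) - f (x (K (a j)))\<bar> powr p)"
  have Jlt: "a j < b j" if "j \<in> J" for j
    using that ab[of j] unfolding J_def by (cases "a j = b j") auto
  have sep: "K (b i) \<le> K (a j) \<or> K (b j) \<le> K (a i)" if "i \<in> J" "j \<in> J" "i \<noteq> j" for i j
  proof -
    have "i < n" "j < n" using that J_def by auto
    from ioo_disj[OF Jlt[OF that(1)] Jlt[OF that(2)] dis[OF this that(3)]]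
    show ?thesis using Kmono ab \<open>i < n\<close> \<open>j < n\<close> by (metis order.trans)
  qed
  have inj: "inj_on \<phi> J"
  proof (rule inj_onI, rule ccontr)
    fix i j assume ij: "i \<in> J" "j \<in> J" "\<phi> i = \<phi> j" "i \<noteq> j"
    then show False using sep[OF ij(1,2,4)] ij unfolding \<phi>_def J_def by auto
  qed
  define \<psi> where "\<psi> = the_inv_into J \<phi>"
  define a' where "a' = (\<lambda>m. if m \<in> \<phi> ` J then x (K (a (\<psi> m))) else 0)"
  define b' where "b' = (\<lambda>m. if m \<in> \<phi> ` J then x (K (b (\<psi> m))) else 0)"
  have psiJ: "\<psi> m \<in> J" if "m \<in> \<phi> ` J" for m
    unfolding \<psi>_def using the_inv_into_into[OF inj that] by simp
  have psi_phi: "\<psi> (\<phi> j) = j" if "j \<in> J" for j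
    unfolding \<psi>_def using the_inv_into_f_f[OF inj that] .
  have img: "\<phi> ` J \<subseteq> {..<M}"
  proof
    fix m assume "m \<in> \<phi> ` J"
    then obtain j where "j \<in> J" "m = K (a j)" unfolding \<phi>_def by auto
    then show "m \<in> {..<M}" using KM[of "b j"] ab[of j] unfolding J_def by auto
  qed
  have s0: "(\<Sum>j<n. h j) = (\<Sum>j\<in>J. h j)"
  proof (rule sum.mono_neutral_right)
    show "\<forall>j\<in>{..<n} - J. h j = 0"
    proof
      fix j assume "j \<in> {..<n} - J"
      then have "K (a j) = K (b j)" using Kmono[of "a j" "b j"] ab[of j] unfolding J_def by force
      then show "h j = 0" unfolding h_def by simp
    qed
  qed (auto simp: J_def)
  have s1: "(\<Sum>j\<in>J. h j) = (\<Sum>m\<in>\<phi> ` J. h (\<psi> m))"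
    by (subst sum.reindex[OF inj]) (simp add: psi_phi)
  have s2: "(\<Sum>m\<in>\<phi> ` J. h (\<psi> m)) = (\<Sum>m<M. \<bar>f (b' m) - f (a' m)\<bar> powr p)"
    by (rule sum.mono_neutral_cong_left) (use img in \<open>auto simp: a'_def b'_def h_def\<close>)
  have eq: "pvar_sum p f n (\<lambda>j. x (K (a j))) (\<lambda>j. x (K (b j))) = pvar_sum p f M a' b'"
    unfolding pvar_sum_def using s0 s1 s2 by (simp add: h_def)
  have nov': "nonoverlapping M a' b'"
    unfolding nonoverlapping_def
  proof (rule conjI; intro allI impI)
    fix j assume "j < M"
    show "0 \<le> a' j \<and> a' j \<le> b' j \<and> b' j \<le> 1"
    proof (cases "j \<in> \<phi> ` J")
      case True
      then have J: "\<psi> j \<in> J" by (rule psiJ)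
      then have "K (a (\<psi> j)) < K (b (\<psi> j))" "K (b (\<psi> j)) \<le> M"
        using KM[of "b (\<psi> j)"] ab[of "\<psi> j"] unfolding J_def by auto
      then have "0 \<le> x (K (a (\<psi> j)))" "x (K (a (\<psi> j))) \<le> x (K (b (\<psi> j)))" "x (K (b (\<psi> j))) \<le> 1"
        using xmono xb by auto
      then show ?thesis using True unfolding a'_def b'_def by simp
    next
      case False
      then show ?thesis by (simp add: a'_def b'_def)
    qed
  next
    fix i j assume "i < M" "j < M" "i \<noteq> j"
    show "{a' i<..<b' i} \<inter> {a' j<..<b' j} = {}"
    proof (cases "i \<in> \<phi> ` J \<and> j \<in> \<phi> ` J")
      case True
      then have J: "\<psi> i \<in> J" "\<psi> j \<in> J" using psiJ by auto
      have "\<psi> i \<noteq> \<psi> j" using True \<open>i \<noteq> j\<close>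
        by (metis \<psi>_def f_the_inv_into_f inj)
      from sep[OF J this] have "K (b (\<psi> i)) \<le> K (a (\<psi> j)) \<or> K (b (\<psi> j)) \<le> K (a (\<psi> i))" .
      moreover have "K (a (\<psi> j)) \<le> M" "K (a (\<psi> i)) \<le> M"
        using J KM[of "a (\<psi> i)"] KM[of "a (\<psi> j)"] ab[of "\<psi> i"] ab[of "\<psi> j"] unfolding J_def by auto
      ultimately have "b' i \<le> a' j \<or> b' j \<le> a' i"
        using True xmono unfolding a'_def b'_def by auto
      then show ?thesis by auto
    qed (auto simp: a'_def b'_def)
  qed
  have "ereal (pvar_sum p f M a' b') \<le> upsilon p M f"
    unfolding upsilon_def by (rule SUP_upper2[where i="(a', b')"]) (use nov' in auto)
  then show ?thesis using eq by simp
qed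

lemma M0_bounded_integrable:
  fixes F :: "real \<Rightarrow> real"
  assumes "F \<in> borel_measurable M0" "\<And>u. \<bar>F u\<bar> \<le> C"
  shows "integrable M0 F"
proof -
  interpret prob_space M0 by (rule M0_prob)
  show ?thesis by (rule integrable_const_bound[where B=C]) (use assms in auto)
qed

theorem lemma4p1:
  fixes p :: real and f g :: "real \<Rightarrow> real" and x :: "nat \<Rightarrow> real" and M :: nat
  assumes "1 \<le> p"
    and "x 0 = 0" and "x M = 1"
    and "\<forall>i<M. x i < x (Suc i)"
    and "\<forall>i<M. \<forall>t \<in> {x i..x (Suc i)}.
           g t = f (x i) + (t - x i) / (x (Suc i) - x i) * (f (x (Suc i)) - f (x i))"
  shows "Var_p p g \<le> upsilon p M f"
proof -
  note p = assms(1)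
  have Mpos: "0 < M" using assms(2,3) by (cases M) auto
  have xlt: "x i < x j" if "i < j" "j \<le> M" for i j
    using that
  proof (induction j)
    case (Suc j)
    then show ?case using assms(4) by (cases "i = j") (auto intro: less_trans)
  qed simp
  have xmono: "x i \<le> x j" if "i \<le> j" "j \<le> M" for i j
    using xlt[of i j] that by (cases "i = j") auto
  have xb: "0 \<le> x i \<and> x i \<le> 1" if "i \<le> M" for i
    using xmono[of 0 i] xmono[of i M] that assms(2,3) by auto
  define S where "S t = {i. i < M \<and> x i \<le> t}" for t
  define I where "I t = Max (S t)" for t
  have Sfin: "finite (S t)" for t unfolding S_def by auto
  have Sne: "0 \<in> S t" if "0 \<le> t" for t unfolding S_def using Mpos that assms(2) by auto
  have Iprop: "I t < M \<and> x (I t) \<le> t \<and> t \<le> x (Suc (I t))" if "0 \<le> t" "t \<le> 1" for t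
  proof -
    have "I t \<in> S t" unfolding I_def using Sfin Sne[OF that(1)] by (intro Max_in) auto
    then have 1: "I t < M" "x (I t) \<le> t" unfolding S_def by auto
    have "t \<le> x (Suc (I t))"
    proof (cases "Suc (I t) = M")
      case True then show ?thesis using assms(3) that by simp
    next
      case False
      then have "Suc (I t) < M" using 1 by simp
      moreover have "Suc (I t) \<notin> S t"
      proof
        assume "Suc (I t) \<in> S t"
        then have "Suc (I t) \<le> I t" unfolding I_def using Sfin[of t] by (simp add: Max_ge)
        then show False by simp
      qed
      ultimately show ?thesis unfolding S_def by auto
    qed
    with 1 show ?thesis by auto
  qed
  have Imono: "I s \<le> I t" if "0 \<le> s" "s \<le> t" for s t
    unfolding I_def
    by (rule Max_mono) (use Sfin Sne[OF that(1)] that in \<open>auto simp: S_def\<close>)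
  define L where "L t = (t - x (I t)) / (x (Suc (I t)) - x (I t))" for t
  have dpos: "0 < x (Suc (I t)) - x (I t)" if "0 \<le> t" "t \<le> 1" for t
    using assms(4) Iprop[OF that] by auto
  have L01: "0 \<le> L t \<and> L t \<le> 1" if "0 \<le> t" "t \<le> 1" for t
    using Iprop[OF that] dpos[OF that] unfolding L_def by auto
  have gL: "g t = f (x (I t)) + L t * (f (x (Suc (I t))) - f (x (I t)))" if "0 \<le> t" "t \<le> 1" for t
    using assms(5) Iprop[OF that] unfolding L_def by auto
  define K where "K u t = (if u < L t then Suc (I t) else I t)" for u t
  have Kmono: "K u s \<le> K u t" if "0 \<le> s" "s \<le> t" "t \<le> 1" for u s t
  proof (cases "I s = I t")
    case True
    have "L s \<le> L t" unfolding L_def True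
      using dpos[of t] that by (intro divide_right_mono) auto
    then show ?thesis unfolding K_def True by auto
  next
    case False
    then have "I s < I t" using Imono[OF that(1,2)] by simp
    then show ?thesis unfolding K_def by auto
  qed
  have KM: "K u t \<le> M" if "0 \<le> t" "t \<le> 1" for u t
    using Iprop[OF that] unfolding K_def by auto
  define Y where "Y t u = (if u < L t then f (x (Suc (I t))) else f (x (I t)))" for t u
  have YK: "f (x (K u t)) = Y t u" for t u unfolding K_def Y_def by auto
  have Ymeas: "Y t \<in> borel_measurable M0" for t unfolding Y_def by (rule step_meas)
  have Ybd: "\<bar>Y t u\<bar> \<le> \<bar>f (x (Suc (I t)))\<bar> + \<bar>f (x (I t))\<bar>" for t u unfolding Y_def by auto
  have Yint: "integral\<^sup>L M0 (Y t) = g t" if "0 \<le> t" "t \<le> 1" for t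
    unfolding Y_def using step_integral[of "L t" "f (x (Suc (I t)))" "f (x (I t))"] L01[OF that] gL[OF that]
    by (simp add: algebra_simps)
  interpret P: prob_space M0 by (rule M0_prob)
  have up0: "ereal 0 \<le> upsilon p M f"
  proof -
    have "nonoverlapping M (\<lambda>_. 0) (\<lambda>_. 0)" unfolding nonoverlapping_def by auto
    then have "ereal (pvar_sum p f M (\<lambda>_. 0) (\<lambda>_. 0)) \<le> upsilon p M f"
      unfolding upsilon_def by (intro SUP_upper2[where i="((\<lambda>_. 0), (\<lambda>_. 0))"]) auto
    moreover have "0 \<le> pvar_sum p f M (\<lambda>_. 0) (\<lambda>_. 0)" unfolding pvar_sum_def by simp
    ultimately show ?thesis by (meson ereal_less_eq(3) order_trans)
  qed
  show ?thesis
  proof (cases "upsilon p M f = \<infinity>")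
    case True then show ?thesis by simp
  next
    case False
    with up0 obtain V where V: "upsilon p M f = ereal V" "0 \<le> V"
      by (cases "upsilon p M f") auto
    show ?thesis unfolding Var_p_def
    proof (rule SUP_least)
      fix nab assume "nab \<in> {(n, a, b). nonoverlapping n a b}"
      then obtain n a b where nab: "nab = (n, a, b)" and nov: "nonoverlapping n a b" by auto
      have ab: "0 \<le> a j \<and> a j \<le> b j \<and> b j \<le> 1" if "j < n" for j
        using nov that unfolding nonoverlapping_def by auto
      define q where "q y = \<bar>y\<bar> powr p" for y :: real
      define X where "X j u = Y (b j) u - Y (a j) u" for j u
      have Xmeas: "X j \<in> borel_measurable M0" for j unfolding X_def using Ymeas by measurable
      have Xbd: "\<bar>X j u\<bar> \<le> (\<bar>f (x (Suc (I (b j))))\<bar> + \<bar>f (x (I (b j)))\<bar>) + (\<bar>f (x (Suc (I (a j))))\<bar> + \<bar>f (x (I (a j)))\<bar>)" for j u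
        unfolding X_def using Ybd[of "b j" u] Ybd[of "a j" u] by linarith
      have Xint: "integrable M0 (X j)" for j by (rule M0_bounded_integrable[OF Xmeas Xbd])
      have qXmeas: "(\<lambda>u. q (X j u)) \<in> borel_measurable M0" for j
        unfolding q_def using Xmeas by measurable
      have qXbd: "\<bar>q (X j u)\<bar> \<le> (\<bar>f (x (Suc (I (b j))))\<bar> + \<bar>f (x (I (b j)))\<bar> + (\<bar>f (x (Suc (I (a j))))\<bar> + \<bar>f (x (I (a j)))\<bar>)) powr p" for j u
        unfolding q_def using Xbd[of j u] p by (auto intro: powr_mono2)
      have qXint: "integrable M0 (\<lambda>u. q (X j u))" for j by (rule M0_bounded_integrable[OF qXmeas qXbd])
      have EX: "integral\<^sup>L M0 (X j) = g (b j) - g (a j)" if "j < n" for j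
        unfolding X_def using Yint ab[OF that] Xint
        by (subst Bochner_Integration.integral_diff) (auto intro: M0_bounded_integrable[OF Ymeas Ybd])
      have pt: "(\<Sum>j<n. q (X j u)) \<le> V powr p" for u
      proof -
        have "ereal (pvar_sum p f n (\<lambda>j. x (K u (a j))) (\<lambda>j. x (K u (b j)))) \<le> upsilon p M f"
          by (rule comb[OF p nov Kmono KM xmono xb])
        then have le: "(\<Sum>j<n. \<bar>f (x (K u (b j))) - f (x (K u (a j)))\<bar> powr p) powr (1/p) \<le> V"
          using V unfolding pvar_sum_def by simp
        define T where "T = (\<Sum>j<n. \<bar>f (x (K u (b j))) - f (x (K u (a j)))\<bar> powr p)"
        have T0: "0 \<le> T" unfolding T_def by (auto intro: sum_nonneg)
        have "T = (T powr (1/p)) powr p" using T0 p by (simp add: powr_powr)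
        also have "\<dots> \<le> V powr p" using le p unfolding T_def[symmetric] by (intro powr_mono2) auto
        finally show ?thesis unfolding T_def q_def X_def YK[symmetric] .
      qed
      have "(\<Sum>j<n. \<bar>g (b j) - g (a j)\<bar> powr p) = (\<Sum>j<n. q (integral\<^sup>L M0 (X j)))"
        using EX by (simp add: q_def)
      also have "\<dots> \<le> (\<Sum>j<n. integral\<^sup>L M0 (\<lambda>u. q (X j u)))"
      proof (rule sum_mono)
        fix j
        show "q (integral\<^sup>L M0 (X j)) \<le> integral\<^sup>L M0 (\<lambda>u. q (X j u))"
          by (rule P.jensens_inequality[where I=UNIV]) (use Xint qXint abs_powr_convex[OF p] in \<open>auto simp: q_def\<close>)
      qed
      also have "\<dots> = integral\<^sup>L M0 (\<lambda>u. \<Sum>j<n. q (X j u))"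
        by (rule Bochner_Integration.integral_sum[symmetric]) (use qXint in auto)
      also have "\<dots> \<le> integral\<^sup>L M0 (\<lambda>u. V powr p)"
        by (rule integral_mono) (use qXint pt in auto)
      also have "\<dots> = V powr p" by simp
      finally have Sle: "(\<Sum>j<n. \<bar>g (b j) - g (a j)\<bar> powr p) \<le> V powr p" .
      have "pvar_sum p g n a b \<le> (V powr p) powr (1/p)"
        unfolding pvar_sum_def using Sle p by (intro powr_mono2) (auto intro: sum_nonneg)
      also have "\<dots> = V" using V p by (simp add: powr_powr)
      finally show "ereal (case nab of (n, a, b) \<Rightarrow> pvar_sum p g n a b) \<le> upsilon p M f"
        using V nab by simp
    qed
  qed
qed

end
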